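(* Let $\mathcal H_{\rm R}$ be the Hilbert space of a single quantum harmonic oscillator with annihilation and creation operators $a,a^\dagger$, $[a,a^\dagger]=\mathbb 1$, let $h_{\rm R}=\Omega_{\rm R}a^\dagger a$ with $\Omega_{\rm R}>0$, and let $v_2=\nu a^\dagger a$ with $\nu\in\mathbb R$. Let $\omega_{\rm R}$ be a state on $\mathcal H_{\rm R}$ such that $\omega_{\rm R}\big((a^\dagger a)^k\big)\le c^k$ for all $k\in\mathbb N$, for some constant $c$, and let $\omega_{{\rm R},M}=\omega_{\rm R}^{\otimes M}$. Set $\overline V_{{\rm R},M}(t)=\frac1M\sum_{m=1}^M\big(e^{ith_{\rm R}}v_2e^{-ith_{\rm R}}\big)^{[m]}$. Then for all $n\in\mathbb N$ and $t_1,\dots,t_n\ge0$, $$\sup_{M\in\mathbb N}\big|\omega_{{\rm R},M}\big(\overline V_{{\rm R},M}(t_1)\cdots\overline V_{{\rm R},M}(t_n)\big)\big|\le (c|\nu|)^n.$$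
   Context: $X^{[m]}$ denotes the operator on $\mathcal H_{\rm R}^{\otimes M}$ acting as $X$ on the $m$-th factor and trivially elsewhere; $\omega_{\rm R}^{\otimes M}$ is the $M$-fold product state. *)

theory Defs
  imports "HOL-Analysis.Analysis"
begin

text \<open>Concrete model: operators on the oscillator space l2(N) are represented by their
  (infinite) matrices in the number basis; the M-mode space l2(N)^(tensor M) has basis
  indexed by lists of length M.\<close>

type_synonym 'i mat = "'i \<Rightarrow> 'i \<Rightarrow> complex"

definition mmult :: "'i set \<Rightarrow> 'i mat \<Rightarrow> 'i mat \<Rightarrow> 'i mat" where
  "mmult I A B = (\<lambda>i j. \<Sum>\<^sub>\<infinity>k\<in>I. A i k * B k j)"

definition mone :: "'i mat" where
  "mone = (\<lambda>i j. if i = j then 1 else 0)"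

fun mpow :: "'i set \<Rightarrow> 'i mat \<Rightarrow> nat \<Rightarrow> 'i mat" where
  "mpow I A 0 = mone"
| "mpow I A (Suc k) = mmult I A (mpow I A k)"

definition mexp :: "'i set \<Rightarrow> 'i mat \<Rightarrow> 'i mat" where
  "mexp I A = (\<lambda>i j. \<Sum>k. mpow I A k i j / of_nat (fact k))"

definition mscale :: "complex \<Rightarrow> 'i mat \<Rightarrow> 'i mat" where
  "mscale z A = (\<lambda>i j. z * A i j)"

definition adj :: "'i mat \<Rightarrow> 'i mat" where
  "adj A = (\<lambda>i j. cnj (A j i))"

text \<open>Annihilation operator: a|n> = sqrt n |n-1>, i.e. <i|a|j> = sqrt j if j = i+1.\<close>
definition ann :: "nat mat" where
  "ann = (\<lambda>i j. if j = Suc i then complex_of_real (sqrt (real j)) else 0)"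

definition cre :: "nat mat" where
  "cre = adj ann"

definition numop :: "nat mat" where
  "numop = mmult UNIV cre ann"

definition evolve :: "nat mat \<Rightarrow> real \<Rightarrow> nat mat \<Rightarrow> nat mat" where
  "evolve h t v = mmult UNIV (mmult UNIV (mexp UNIV (mscale (\<i> * of_real t) h)) v)
                              (mexp UNIV (mscale (- \<i> * of_real t) h))"

definition modes :: "nat \<Rightarrow> nat list set" where
  "modes M = {xs. length xs = M}"

definition embed :: "nat \<Rightarrow> nat \<Rightarrow> nat mat \<Rightarrow> nat list mat" where
  "embed M m X = (\<lambda>i j. X (i ! (m - 1)) (j ! (m - 1)) *
      (\<Prod>l\<in>{..<M} - {m - 1}. if i ! l = j ! l then 1 else 0))"

definition density :: "nat mat \<Rightarrow> bool" where
  "density \<rho> \<longleftrightarrow>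
     (\<forall>i j. \<rho> i j = cnj (\<rho> j i)) \<and>
     (\<forall>x :: nat \<Rightarrow> complex. finite {i. x i \<noteq> 0} \<longrightarrow>
        0 \<le> Re (\<Sum>i\<in>{i. x i \<noteq> 0}. \<Sum>j\<in>{i. x i \<noteq> 0}. cnj (x i) * \<rho> i j * x j)) \<and>
     (\<lambda>i. \<rho> i i) summable_on UNIV \<and> (\<Sum>\<^sub>\<infinity>i. \<rho> i i) = 1"

definition ptensor :: "nat \<Rightarrow> nat mat \<Rightarrow> nat list mat" where
  "ptensor M \<rho> = (\<lambda>i j. \<Prod>l<M. \<rho> (i ! l) (j ! l))"

text \<open>The state omega(X) = tr(rho X), and its well-definedness (absolute summability).\<close>
definition sdef :: "'i set \<Rightarrow> 'i mat \<Rightarrow> 'i mat \<Rightarrow> bool" where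
  "sdef I \<rho> X \<longleftrightarrow> (\<lambda>(i, j). \<rho> j i * X i j) summable_on (I \<times> I)"

definition sval :: "'i set \<Rightarrow> 'i mat \<Rightarrow> 'i mat \<Rightarrow> complex" where
  "sval I \<rho> X = (\<Sum>\<^sub>\<infinity>(i, j)\<in>I \<times> I. \<rho> j i * X i j)"

definition Vbar :: "nat \<Rightarrow> nat mat \<Rightarrow> nat mat \<Rightarrow> real \<Rightarrow> nat list mat" where
  "Vbar M h v t = (\<lambda>i j. (1 / of_nat M) * (\<Sum>m=1..M. embed M m (evolve h t v) i j))"

definition Vprod :: "nat \<Rightarrow> nat mat \<Rightarrow> nat mat \<Rightarrow> real list \<Rightarrow> nat list mat" where
  "Vprod M h v ts = foldr (\<lambda>t P. mmult (modes M) (Vbar M h v t) P) ts mone"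

end

theory Submission imports Defs begin


definition diag :: "('i \<Rightarrow> complex) \<Rightarrow> 'i mat" where
  "diag d = (\<lambda>i j. if i = j then d i else 0)"

lemma has_sum_single1:
  assumes "i \<in> A" "\<And>k. k \<in> A \<Longrightarrow> k \<noteq> i \<Longrightarrow> f k = 0"
  shows "(f has_sum f i) A"
  by (rule has_sum_finite_neutralI[of "{i}"]) (use assms in auto)

lemma infsum_single1:
  assumes "i \<in> A" "\<And>k. k \<in> A \<Longrightarrow> k \<noteq> i \<Longrightarrow> f k = 0"
  shows "infsum f A = f i"
  by (rule infsumI, rule has_sum_single1) (use assms in auto)

lemma has_sum_sum1:
  fixes f :: "'a \<Rightarrow> 'b \<Rightarrow> real"
  assumes "finite I" "\<And>l. l \<in> I \<Longrightarrow> (f l has_sum s l) A"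
  shows "((\<lambda>x. \<Sum>l\<in>I. f l x) has_sum (\<Sum>l\<in>I. s l)) A"
  using assms
proof (induction I rule: finite_induct)
  case empty then show ?case by simp
next
  case (insert a F)
  then show ?case by (simp add: has_sum_add)
qed

lemma mone_diag: "mone = diag (\<lambda>_. 1)"
  by (simp add: mone_def diag_def fun_eq_iff)

lemma mmult_diag_left: "mmult UNIV (diag a) B = (\<lambda>i j. a i * B i j)"
  unfolding mmult_def diag_def
  by (rule ext, rule ext, subst infsum_single1[where i=i]) auto

lemma mmult_diag_right: "mmult UNIV A (diag b) = (\<lambda>i j. A i j * b j)"
  unfolding mmult_def diag_def
  by (rule ext, rule ext, subst infsum_single1[where i=j]) auto

lemma mmult_diag_diag: "mmult UNIV (diag a) (diag b) = diag (\<lambda>i. a i * b i)"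
  unfolding mmult_diag_left by (simp add: diag_def fun_eq_iff)

lemma mpow_diag: "mpow UNIV (diag d) k = diag (\<lambda>i. d i ^ k)"
  by (induction k) (simp_all add: mone_diag mmult_diag_diag)

lemma mscale_diag: "mscale z (diag d) = diag (\<lambda>i. z * d i)"
  by (simp add: mscale_def diag_def fun_eq_iff)

lemma mexp_diag: "mexp UNIV (diag d) = diag (\<lambda>i. exp (d i))"
proof (rule ext, rule ext)
  fix i j
  show "mexp UNIV (diag d) i j = diag (\<lambda>i. exp (d i)) i j"
  proof (cases "i = j")
    case True
    have e: "(\<lambda>k. d i ^ k / of_nat (fact k)) = (\<lambda>n. d i ^ n /\<^sub>R fact n)"
      by (simp add: scaleR_conv_of_real divide_inverse of_real_inverse mult.commute)
    have "(\<lambda>k. d i ^ k / of_nat (fact k)) sums exp (d i)"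
      unfolding e by (rule exp_converges)
    then show ?thesis using True unfolding mexp_def mpow_diag by (simp add: diag_def sums_iff)
  next
    case False
    then show ?thesis unfolding mexp_def mpow_diag by (simp add: diag_def)
  qed
qed

lemma numop_diag: "numop = diag (\<lambda>n. of_nat n)"
proof (rule ext, rule ext)
  fix i j :: nat
  have "numop i j = cre i (i - 1) * ann (i - 1) j"
    unfolding numop_def mmult_def
  proof (rule infsum_single1)
    fix k assume "k \<noteq> i - 1"
    then have "i \<noteq> Suc k" by auto
    then show "cre i k * ann k j = 0" by (simp add: cre_def adj_def ann_def)
  qed simp
  also have "\<dots> = diag (\<lambda>n. of_nat n) i j"
  proof (cases i)
    case 0
    then show ?thesis by (simp add: cre_def adj_def ann_def diag_def)
  next
    case (Suc n)
    have sq: "complex_of_real (sqrt (real i)) * complex_of_real (sqrt (real i)) = of_nat i"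
    proof -
      have "sqrt (real i) * sqrt (real i) = real i" by simp
      then have "complex_of_real (sqrt (real i) * sqrt (real i)) = of_nat i" by simp
      then show ?thesis by (simp only: of_real_mult)
    qed
    have c: "cre i (i - 1) = complex_of_real (sqrt (real i))"
      using Suc by (simp add: cre_def adj_def ann_def)
    have a: "ann (i - 1) j = (if j = i then complex_of_real (sqrt (real i)) else 0)"
      using Suc by (simp add: ann_def)
    show ?thesis unfolding c a diag_def using sq by auto
  qed
  finally show "numop i j = diag (\<lambda>n. of_nat n) i j" .
qed

lemma evolve_diag: "evolve (diag h) t (diag v) = diag v"
  unfolding evolve_def
  apply (simp only: mscale_diag mexp_diag mmult_diag_diag)
  apply (simp add: diag_def fun_eq_iff flip: exp_add)
  done




lemma modes_iff[simp]: "xs \<in> modes M \<longleftrightarrow> length xs = M"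
  by (simp add: modes_def)

lemma embed_diag:
  assumes "i \<in> modes M" "j \<in> modes M" "1 \<le> m" "m \<le> M"
  shows "embed M m (diag e) i j = (if i = j then e (i ! (m - 1)) else 0)"
proof (cases "i = j")
  case True
  then show ?thesis by (simp add: embed_def diag_def)
next
  case False
  from assms have len: "length i = M" "length j = M" by auto
  from False len obtain l where l: "l < M" "i ! l \<noteq> j ! l"
    using nth_equalityI by metis
  show ?thesis
  proof (cases "l = m - 1")
    case True
    then show ?thesis using l False by (simp add: embed_def diag_def)
  next
    case F: False
    have "(\<Prod>l\<in>{..<M} - {m - 1}. if i ! l = j ! l then 1 else 0 :: complex) = 0"
      using l F by (subst prod_zero_iff) auto
    then show ?thesis using False by (simp add: embed_def)
  qed
qed

definition Dg :: "nat \<Rightarrow> (nat \<Rightarrow> complex) \<Rightarrow> nat list \<Rightarrow> complex" where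
  "Dg M e i = (1 / of_nat M) * (\<Sum>m=1..M. e (i ! (m - 1)))"

lemma Vbar_diag:
  assumes "i \<in> modes M" "j \<in> modes M"
  shows "Vbar M (diag h) (diag v) t i j = (if i = j then Dg M v i else 0)"
proof -
  have "(\<Sum>m=1..M. embed M m (evolve (diag h) t (diag v)) i j)
        = (\<Sum>m=1..M. (if i = j then v (i ! (m - 1)) else 0))"
    by (rule sum.cong) (use assms in \<open>auto simp: evolve_diag embed_diag\<close>)
  then show ?thesis by (simp add: Vbar_def Dg_def)
qed

lemma Vprod_diag:
  assumes "i \<in> modes M" "j \<in> modes M"
  shows "Vprod M (diag h) (diag v) ts i j = (if i = j then Dg M v i ^ length ts else 0)"
  using assms
proof (induction ts arbitrary: i j)
  case Nil
  then show ?case by (simp add: Vprod_def mone_def)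
next
  case (Cons t ts)
  have "Vprod M (diag h) (diag v) (t # ts) i j =
        (\<Sum>\<^sub>\<infinity>k\<in>modes M. Vbar M (diag h) (diag v) t i k * Vprod M (diag h) (diag v) ts k j)"
    by (simp add: Vprod_def mmult_def)
  also have "\<dots> = Vbar M (diag h) (diag v) t i i * Vprod M (diag h) (diag v) ts i j"
    by (rule infsum_single1) (use Cons.prems in \<open>auto simp: Vbar_diag\<close>)
  also have "\<dots> = (if i = j then Dg M v i ^ length (t # ts) else 0)"
    using Cons by (simp add: Vbar_diag)
  finally show ?case .
qed

lemma diag_has_sum_iff:
  fixes f :: "'a \<times> 'a \<Rightarrow> 'b::{comm_monoid_add, topological_space}"
  assumes "\<And>i j. i \<in> A \<Longrightarrow> j \<in> A \<Longrightarrow> f (i, j) = (if i = j then F i else 0)"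
  shows "(f has_sum S) (A \<times> A) \<longleftrightarrow> (F has_sum S) A"
proof -
  have "(f has_sum S) (A \<times> A) \<longleftrightarrow> (f has_sum S) ((\<lambda>i. (i, i)) ` A)"
    by (rule has_sum_cong_neutral) (use assms in auto)
  also have "\<dots> \<longleftrightarrow> ((f \<circ> (\<lambda>i. (i, i))) has_sum S) A"
    by (rule has_sum_reindex) (simp add: inj_on_def)
  also have "\<dots> \<longleftrightarrow> (F has_sum S) A"
    by (rule has_sum_cong) (use assms in auto)
  finally show ?thesis .
qed

lemma prod_has_sum:
  fixes g :: "nat \<Rightarrow> nat \<Rightarrow> real"
  assumes "\<And>l k. l < M \<Longrightarrow> g l k \<ge> 0" "\<And>l. l < M \<Longrightarrow> (g l has_sum s l) UNIV"
  shows "((\<lambda>xs. \<Prod>l<M. g l (xs ! l)) has_sum (\<Prod>l<M. s l)) (modes M)"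
  using assms
proof (induction M arbitrary: g s)
  case 0
  have "modes 0 = {[]}" by (auto simp: modes_def)
  moreover have "((\<lambda>xs. 1::real) has_sum 1) {[]}" by (rule has_sum_finiteI) auto
  ultimately show ?case by simp
next
  case (Suc M)
  define Q where "Q xs = (\<Prod>l<M. g (Suc l) (xs ! l))" for xs
  define SQ where "SQ = (\<Prod>l<M. s (Suc l))"
  have IH: "(Q has_sum SQ) (modes M)"
    unfolding Q_def SQ_def by (rule Suc.IH) (use Suc.prems in auto)
  have Qnn: "Q xs \<ge> 0" for xs
    unfolding Q_def by (rule prod_nonneg) (use Suc.prems in auto)
  have img: "modes (Suc M) = (\<lambda>(k, xs). k # xs) ` (UNIV \<times> modes M)"
  proof (rule set_eqI)
    fix ys show "ys \<in> modes (Suc M) \<longleftrightarrow> ys \<in> (\<lambda>(k, xs). k # xs) ` (UNIV \<times> modes M)"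
      by (cases ys) (auto simp: image_iff)
  qed
  have inj: "inj_on (\<lambda>(k, xs). k # xs) (UNIV \<times> modes M)"
    by (auto simp: inj_on_def)
  have eq: "((\<lambda>xs. \<Prod>l<Suc M. g l (xs ! l)) \<circ> (\<lambda>(k, xs). k # xs)) = (\<lambda>(k, xs). g 0 k * Q xs)"
    by (auto simp del: prod.lessThan_Suc simp: Q_def prod.lessThan_Suc_shift fun_eq_iff)
  have seq: "(\<Prod>l<Suc M. s l) = s 0 * SQ"
    by (simp del: prod.lessThan_Suc add: SQ_def prod.lessThan_Suc_shift)
  have inner: "((\<lambda>xs. g 0 k * Q xs) has_sum (g 0 k * SQ)) (modes M)" for k
    by (rule has_sum_cmult_right[OF IH])
  have outer: "((\<lambda>k. g 0 k * SQ) has_sum (s 0 * SQ)) UNIV"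
    by (rule has_sum_cmult_left) (use Suc.prems in auto)
  have summ: "(\<lambda>(k, xs). g 0 k * Q xs) summable_on (UNIV \<times> modes M)"
    by (rule summable_on_SigmaI[OF _ has_sum_imp_summable[OF outer]])
       (use inner Suc.prems Qnn in auto)
  have "((\<lambda>(k, xs). g 0 k * Q xs) has_sum (s 0 * SQ)) (UNIV \<times> modes M)"
    by (rule has_sum_SigmaI[OF _ outer summ]) (use inner in auto)
  then show ?case
    unfolding img seq has_sum_reindex[OF inj] eq .
qed




lemma power_jensen:
  fixes x :: "nat \<Rightarrow> real"
  assumes "M \<ge> 1" "\<And>l. l < M \<Longrightarrow> x l \<ge> 0"
  shows "((\<Sum>l<M. x l) / M) ^ n \<le> (\<Sum>l<M. x l ^ n) / M"
proof -
  have cvx: "convex_on {0..} (\<lambda>x::real. x ^ n)"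
  proof (cases "even n")
    case True
    then show ?thesis using convex_on_subset[OF convex_power_even[OF True]] by blast
  next
    case False
    then show ?thesis using convex_power_odd by blast
  qed
  have "(\<lambda>x::real. x ^ n) (\<Sum>l\<in>{..<M}. (1 / real M) *\<^sub>R x l) \<le> (\<Sum>l\<in>{..<M}. (1 / real M) * (\<lambda>x. x ^ n) (x l))"
    by (rule convex_on_sum[OF _ _ cvx]) (use assms in \<open>auto simp: lessThan_empty_iff\<close>)
  then show ?thesis
    by (simp add: sum_divide_distrib)
qed

lemma core_bound:
  fixes p :: "nat \<Rightarrow> real"
  assumes M: "M \<ge> 1" and pnn: "\<And>k. p k \<ge> 0" and p1: "(p has_sum 1) UNIV"
    and pE: "((\<lambda>k. p k * real k ^ n) has_sum En) UNIV"
  shows "\<exists>S. ((\<lambda>xs. (\<Prod>l<M. p (xs ! l)) * ((\<Sum>l<M. real (xs ! l)) / M) ^ n) has_sum S) (modes M)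
            \<and> 0 \<le> S \<and> S \<le> En"
proof -
  define P where "P xs = (\<Prod>l<M. p (xs ! l))" for xs
  define H where "H l xs = (\<Prod>l'<M. (if l' = l then p (xs ! l') * real (xs ! l') ^ n else p (xs ! l')))" for l xs
  have Hs: "(H l has_sum En) (modes M)" if "l < M" for l
  proof -
    have "((\<lambda>xs. \<Prod>l'<M. (\<lambda>l' k. if l' = l then p k * real k ^ n else p k) l' (xs ! l')) has_sum
          (\<Prod>l'<M. (\<lambda>l'. if l' = l then En else 1) l')) (modes M)"
      by (rule prod_has_sum) (use pnn p1 pE in auto)
    moreover have "(\<Prod>l'<M. (if l' = l then En else 1)) = En"
      using that by simp
    ultimately show ?thesis unfolding H_def by (simp cong: if_cong)
  qed
  have Heq: "H l xs = P xs * real (xs ! l) ^ n" if "l < M" for l xs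
  proof -
    have "H l xs = (\<Prod>l'<M. p (xs ! l') * (if l' = l then real (xs ! l') ^ n else 1))"
      unfolding H_def by (rule prod.cong) auto
    also have "\<dots> = P xs * (\<Prod>l'<M. (if l' = l then real (xs ! l') ^ n else 1))"
      unfolding P_def by (rule prod.distrib)
    also have "\<dots> = P xs * real (xs ! l) ^ n"
      using that by simp
    finally show ?thesis .
  qed
  define B where "B xs = (\<Sum>l<M. H l xs) * (1 / M)" for xs
  have Bs: "(B has_sum ((\<Sum>l<M. En) * (1 / M))) (modes M)"
    unfolding B_def by (rule has_sum_cmult_left, rule has_sum_sum1) (use Hs in auto)
  have "(\<Sum>l<M. En) * (1 / M) = En" using M by simp
  with Bs have Bs': "(B has_sum En) (modes M)" by simp
  define G where "G xs = P xs * ((\<Sum>l<M. real (xs ! l)) / M) ^ n" for xs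
  have Pnn: "P xs \<ge> 0" for xs unfolding P_def by (rule prod_nonneg) (use pnn in auto)
  have Gnn: "G xs \<ge> 0" for xs
    unfolding G_def by (intro mult_nonneg_nonneg Pnn zero_le_power divide_nonneg_nonneg sum_nonneg) auto
  have GB: "G xs \<le> B xs" for xs
  proof -
    have "G xs \<le> P xs * ((\<Sum>l<M. real (xs ! l) ^ n) / M)"
      unfolding G_def by (rule mult_left_mono[OF power_jensen[OF M] Pnn]) auto
    also have "\<dots> = B xs"
      unfolding B_def by (simp add: Heq sum_distrib_left sum_divide_distrib)
    finally show ?thesis .
  qed
  have Gsum: "G summable_on modes M"
    by (rule summable_on_comparison_test[OF has_sum_imp_summable[OF Bs']]) (use GB Gnn in auto)
  have "infsum G (modes M) \<le> En"
    using has_sum_mono[OF has_sum_infsum[OF Gsum] Bs'] GB by auto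
  moreover have "infsum G (modes M) \<ge> 0"
    by (rule infsum_nonneg) (use Gnn in auto)
  ultimately show ?thesis
    using has_sum_infsum[OF Gsum] unfolding G_def P_def by blast
qed




lemma sum_shift1: "(\<Sum>m=1..M. g (m - 1)) = (\<Sum>l<(M::nat). g l)"
  by (induction M) (simp_all add: sum.cl_ivl_Suc)

theorem proposition4:
  fixes Om \<nu> c :: real and \<rho> :: "nat mat" and ts :: "real list"
  assumes "Om > 0"
    and "density \<rho>"
    and "\<forall>k. sdef UNIV \<rho> (mpow UNIV numop k) \<and>
             Re (sval UNIV \<rho> (mpow UNIV numop k)) \<le> c ^ k"
    and "\<forall>t\<in>set ts. t \<ge> 0"
  shows "\<forall>M\<ge>1.
     sdef (modes M) (ptensor M \<rho>)
          (Vprod M (mscale (of_real Om) numop) (mscale (of_real \<nu>) numop) ts) \<and>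
     cmod (sval (modes M) (ptensor M \<rho>)
          (Vprod M (mscale (of_real Om) numop) (mscale (of_real \<nu>) numop) ts))
       \<le> (c * \<bar>\<nu>\<bar>) ^ length ts"
proof (intro allI impI)
  fix M :: nat assume M: "M \<ge> 1"
  define n where "n = length ts"
  define p where "p k = Re (\<rho> k k)" for k
  define ev where "ev = (\<lambda>k::nat. complex_of_real \<nu> * of_nat k)"
  have hdiag: "mscale (of_real Om) numop = diag (\<lambda>k. complex_of_real Om * of_nat k)"
    by (simp add: numop_diag mscale_diag)
  have vdiag: "mscale (of_real \<nu>) numop = diag ev"
    by (simp add: numop_diag mscale_diag ev_def)
  from assms(2) have herm: "\<And>i j. \<rho> i j = cnj (\<rho> j i)"
    and pos: "\<And>x :: nat \<Rightarrow> complex. finite {i. x i \<noteq> 0} \<Longrightarrow>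
        0 \<le> Re (\<Sum>i\<in>{i. x i \<noteq> 0}. \<Sum>j\<in>{i. x i \<noteq> 0}. cnj (x i) * \<rho> i j * x j)"
    and trs: "(\<lambda>i. \<rho> i i) summable_on UNIV" and tr1: "(\<Sum>\<^sub>\<infinity>i. \<rho> i i) = 1"
    unfolding density_def by blast+
  have rho_real: "\<rho> k k = complex_of_real (p k)" for k
  proof -
    have "Im (\<rho> k k) = Im (cnj (\<rho> k k))" using herm[of k k] by (rule arg_cong)
    then have "Im (\<rho> k k) = 0" by simp
    then show ?thesis by (simp add: p_def complex_eq_iff)
  qed
  have pnn: "p k \<ge> 0" for k
  proof -
    define x where "x = (\<lambda>i::nat. if i = k then (1::complex) else 0)"
    have xs: "{i. x i \<noteq> 0} = {k}" by (auto simp: x_def)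
    have "0 \<le> Re (\<Sum>i\<in>{i. x i \<noteq> 0}. \<Sum>j\<in>{i. x i \<noteq> 0}. cnj (x i) * \<rho> i j * x j)"
      by (rule pos) (simp add: xs)
    then show ?thesis unfolding xs by (simp add: x_def p_def)
  qed
  have p1: "(p has_sum 1) UNIV"
  proof -
    have hs: "((\<lambda>i. \<rho> i i) has_sum 1) UNIV" using trs tr1 by (metis has_sum_infsum)
    have pe: "p = (\<lambda>x. Re (\<rho> x x))" by (simp add: fun_eq_iff p_def)
    from has_sum_Re[OF hs] show ?thesis unfolding pe by simp
  qed
  have moment: "((\<lambda>i. p i * real i ^ k) has_sum Re (sval UNIV \<rho> (mpow UNIV numop k))) UNIV" for k
  proof -
    let ?f = "\<lambda>(i, j). \<rho> j i * mpow UNIV numop k i j"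
    have md: "mpow UNIV numop k = diag (\<lambda>i. of_nat i ^ k)" by (simp add: numop_diag mpow_diag)
    have "?f summable_on (UNIV \<times> UNIV)" using assms(3) by (simp add: sdef_def)
    then have "(?f has_sum sval UNIV \<rho> (mpow UNIV numop k)) (UNIV \<times> UNIV)"
      by (simp add: sval_def)
    then have "((\<lambda>i. complex_of_real (p i * real i ^ k)) has_sum sval UNIV \<rho> (mpow UNIV numop k)) UNIV"
      by (subst (asm) diag_has_sum_iff[where F = "\<lambda>i. complex_of_real (p i * real i ^ k)"])
         (auto simp: md diag_def rho_real)
    from has_sum_Re[OF this] show ?thesis by simp
  qed
  define En where "En = Re (sval UNIV \<rho> (mpow UNIV numop n))"
  have Enc: "En \<le> c ^ n" using assms(3) by (simp add: En_def)
  obtain S where S: "((\<lambda>xs. (\<Prod>l<M. p (xs ! l)) * ((\<Sum>l<M. real (xs ! l)) / M) ^ n) has_sum S) (modes M)"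
      and S0: "0 \<le> S" and SE: "S \<le> En"
    using core_bound[OF M pnn p1 moment[of n]] unfolding En_def by blast
  let ?V = "Vprod M (mscale (of_real Om) numop) (mscale (of_real \<nu>) numop) ts"
  let ?f = "\<lambda>(i, j). ptensor M \<rho> j i * ?V i j"
  define F where "F xs = complex_of_real (\<nu> ^ n * ((\<Prod>l<M. p (xs ! l)) * ((\<Sum>l<M. real (xs ! l)) / M) ^ n))" for xs
  have FS: "(F has_sum complex_of_real (\<nu> ^ n * S)) (modes M)"
    unfolding F_def by (rule has_sum_of_real, rule has_sum_cmult_right[OF S])
  have Dg_eq: "Dg M ev xs = complex_of_real (\<nu> * ((\<Sum>l<M. real (xs ! l)) / M))" for xs
  proof -
    have "(\<Sum>m=1..M. ev (xs ! (m - 1))) = (\<Sum>l<M. ev (xs ! l))"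
      by (rule sum_shift1)
    also have "\<dots> = complex_of_real (\<nu> * (\<Sum>l<M. real (xs ! l)))"
      by (simp add: ev_def sum_distrib_left)
    finally show ?thesis by (simp add: Dg_def)
  qed
  have fdiag: "?f (i, j) = (if i = j then F i else 0)" if "i \<in> modes M" "j \<in> modes M" for i j
  proof (cases "i = j")
    case True
    define Pi where "Pi = (\<Prod>l<M. p (i ! l))"
    define Ai where "Ai = (\<Sum>l<M. real (i ! l)) / M"
    have pt: "ptensor M \<rho> i i = complex_of_real Pi"
      by (simp add: ptensor_def rho_real Pi_def)
    have V: "?V i i = complex_of_real (\<nu> * Ai) ^ n"
      using that unfolding hdiag vdiag by (simp add: Vprod_diag Dg_eq n_def Ai_def)
    have "?f (i, i) = complex_of_real (Pi * (\<nu> * Ai) ^ n)"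
      by (simp add: pt V)
    also have "\<dots> = F i"
    proof -
      have r: "Pi * (\<nu> * Ai) ^ n = \<nu> ^ n * (Pi * Ai ^ n)" by (simp add: power_mult_distrib)
      show ?thesis unfolding F_def Pi_def[symmetric] Ai_def[symmetric] r ..
    qed
    finally show ?thesis using True by simp
  next
    case False
    then show ?thesis
      using that unfolding hdiag vdiag by (simp add: Vprod_diag)
  qed
  have fS: "(?f has_sum complex_of_real (\<nu> ^ n * S)) (modes M \<times> modes M)"
    using diag_has_sum_iff[of "modes M" ?f F] fdiag FS by blast
  have sd: "sdef (modes M) (ptensor M \<rho>) ?V"
    unfolding sdef_def using fS has_sum_imp_summable by blast
  have sv: "sval (modes M) (ptensor M \<rho>) ?V = complex_of_real (\<nu> ^ n * S)"
    unfolding sval_def using fS infsumI by blast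
  have "cmod (complex_of_real (\<nu> ^ n * S)) = \<bar>\<nu>\<bar> ^ n * S"
    using S0 by (simp only: norm_of_real abs_mult power_abs)
  also have "\<dots> \<le> \<bar>\<nu>\<bar> ^ n * c ^ n"
    using SE Enc by (intro mult_left_mono) auto
  also have "\<dots> = (c * \<bar>\<nu>\<bar>) ^ n" by (simp add: power_mult_distrib)
  finally show "sdef (modes M) (ptensor M \<rho>) ?V \<and> cmod (sval (modes M) (ptensor M \<rho>) ?V) \<le> (c * \<bar>\<nu>\<bar>) ^ length ts"
    using sd sv n_def by simp
qed


end
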